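(* Let $p>1$ and consider, for $A\in\mathbb R^{m\times N}$, $y\in\mathbb R^m$, $\eta>0$, the problem $\min_{x\in\mathbb R^N}\|Ax-y\|_2$ subject to $\|x\|_p\le\eta$. (i) If $A$ has full row rank and $0<\eta<\min_{Ax=y}\|x\|_p$, then this problem has a unique optimal solution $x^*$, and there is a unique Lagrange multiplier $\mu$ satisfying the KKT conditions $A^T(Ax^*-y)+\mu\nabla f(x^* )=0$, $0\le\mu\perp f(x^* )-\eta^p\le0$ (with $f(x)=\|x\|_p^p$); moreover $\mu>0$ and $\|x^*\|_p=\eta$. (ii) If every $m\times m$ submatrix of $A$ is invertible (with $N\ge m$), $y\ne0$, and $0<\eta<\min_{Ax=y}\|x\|_p$, then the unique optimal solution satisfies $|\mathrm{supp}(x^* )|\ge N-m+1$.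
   Context: $\|x\|_p:=(\sum_i|x_i|^p)^{1/p}$; $\mathrm{supp}(x)=\{i:x_i\ne0\}$. $a\perp b$ for scalars means $ab=0$. *)

theory Defs
  imports "HOL-Analysis.Analysis"
begin

text \<open>f(x) = sum of |x_i|^p, i.e. the p-th power of the p-norm.\<close>
definition lp_pow :: "real \<Rightarrow> real^'n \<Rightarrow> real" where
  "lp_pow p x = (\<Sum>i\<in>UNIV. \<bar>x $ i\<bar> powr p)"

text \<open>The p-norm.\<close>
definition lp_norm :: "real \<Rightarrow> real^'n \<Rightarrow> real" where
  "lp_norm p x = (lp_pow p x) powr (1 / p)"

text \<open>x is an optimal solution of min ||Ax - y||_2 s.t. ||x||_p \<le> eta.\<close>
definition is_opt :: "real \<Rightarrow> real^'n^'m \<Rightarrow> real^'m \<Rightarrow> real \<Rightarrow> real^'n \<Rightarrow> bool" where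
  "is_opt p A y \<eta> x \<longleftrightarrow> lp_norm p x \<le> \<eta> \<and>
     (\<forall>z. lp_norm p z \<le> \<eta> \<longrightarrow> norm (A *v x - y) \<le> norm (A *v z - y))"

text \<open>KKT conditions with multiplier mu at x:
  A^T(Ax-y) + mu grad f(x) = 0, 0 \<le> mu \<perp> f(x) - eta^p \<le> 0.\<close>
definition is_kkt_mult :: "real \<Rightarrow> real^'n^'m \<Rightarrow> real^'m \<Rightarrow> real \<Rightarrow> real^'n \<Rightarrow> real \<Rightarrow> bool" where
  "is_kkt_mult p A y \<eta> x \<mu> \<longleftrightarrow>
     (\<exists>g. (GDERIV (lp_pow p) x :> g) \<and> transpose A *v (A *v x - y) + \<mu> *\<^sub>R g = 0) \<and>
     0 \<le> \<mu> \<and> lp_pow p x - \<eta> powr p \<le> 0 \<and> \<mu> * (lp_pow p x - \<eta> powr p) = 0"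

text \<open>Every m x m submatrix (choice of m distinct columns) is invertible.\<close>
definition all_square_submatrices_invertible :: "real^'n^'m \<Rightarrow> bool" where
  "all_square_submatrices_invertible A \<longleftrightarrow>
     (\<forall>c :: 'm \<Rightarrow> 'n. inj c \<longrightarrow> invertible ((\<chi> i k. A $ i $ c k) :: real^'m^'m))"

end

theory Submission
  imports Defs
begin

definition dphi :: "real \<Rightarrow> real \<Rightarrow> real" where
  "dphi p t = p * sgn t * \<bar>t\<bar> powr (p - 1)"

lemma phi_deriv:
  assumes p: "p > 1"
  shows "((\<lambda>s. \<bar>s\<bar> powr p) has_real_derivative dphi p t) (at t)"
proof (cases "t > 0")
  case True
  have ev: "eventually (\<lambda>s. \<bar>s\<bar> powr p = s powr p) (nhds t)"
    using eventually_nhds_in_open[of "{0<..}" t] True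
    by (auto elim!: eventually_mono)
  have "((\<lambda>s. s powr p) has_real_derivative p * t powr (p - 1)) (at t)"
    using has_real_derivative_powr[OF True] .
  then show ?thesis
    using True by (subst DERIV_cong_ev[OF refl ev refl]) (simp add: dphi_def)
next
  case False
  show ?thesis
  proof (cases "t < 0")
    case True
    have ev: "eventually (\<lambda>s. \<bar>s\<bar> powr p = (-s) powr p) (nhds t)"
      using eventually_nhds_in_open[of "{..<0}" t] True
      by (auto elim!: eventually_mono)
    have "((\<lambda>s. (-s) powr p) has_real_derivative p * (-t) powr (p - 1) * (-1)) (at t)"
      using True by (auto intro!: derivative_eq_intros)
    then show ?thesis
      using True by (subst DERIV_cong_ev[OF refl ev refl]) (simp add: dphi_def)
  next
    case False
    with \<open>\<not> t > 0\<close> have t0: "t = 0" by simp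
    have "((\<lambda>h. \<bar>h\<bar> powr (p - 1)) \<longlongrightarrow> 0) (at (0::real))"
      using p by (intro tendsto_zero_powrI) (auto intro!: tendsto_eq_intros)
    moreover have "eventually (\<lambda>h. \<bar>h\<bar> powr (p - 1) = \<bar>(\<bar>0 + h\<bar> powr p - \<bar>0::real\<bar> powr p) / h\<bar>) (at (0::real))"
    proof -
      have "\<forall>h::real. h \<noteq> 0 \<longrightarrow> \<bar>h\<bar> powr (p - 1) = \<bar>(\<bar>0 + h\<bar> powr p - \<bar>0::real\<bar> powr p) / h\<bar>"
      proof (intro allI impI)
        fix h :: real assume "h \<noteq> 0"
        then have "\<bar>h\<bar> powr (p - 1) = \<bar>h\<bar> powr p / \<bar>h\<bar>"
          using powr_diff[of "\<bar>h\<bar>" p 1] \<open>h \<noteq> 0\<close> by simp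
        then show "\<bar>h\<bar> powr (p - 1) = \<bar>(\<bar>0 + h\<bar> powr p - \<bar>0::real\<bar> powr p) / h\<bar>"
          by (simp add: abs_divide)
      qed
      then show ?thesis unfolding eventually_at_filter by (simp add: always_eventually)
    qed
    ultimately have "((\<lambda>h. \<bar>(\<bar>0 + h\<bar> powr p - \<bar>0::real\<bar> powr p) / h\<bar>) \<longlongrightarrow> 0) (at (0::real))"
      by (rule Lim_transform_eventually)
    then have "((\<lambda>h. (\<bar>0 + h\<bar> powr p - \<bar>0::real\<bar> powr p) / h) \<longlongrightarrow> 0) (at (0::real))"
      by (rule tendsto_rabs_zero_cancel)
    then show ?thesis using t0 by (simp add: DERIV_def dphi_def)
  qed
qed


lemma dphi_mono:
  assumes p: "p > 1" and st: "s < t"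
  shows "dphi p s < dphi p t"
proof -
  have pp: "p - 1 > 0" using p by simp
  consider "0 \<le> s" | "t \<le> 0" | "s < 0" "0 < t" by linarith
  then show ?thesis
  proof cases
    case 1
    then have "\<bar>s\<bar> powr (p - 1) < \<bar>t\<bar> powr (p - 1)"
      using st pp by (intro powr_less_mono2) auto
    then show ?thesis using 1 st p
      by (cases "s = 0") (auto simp: dphi_def sgn_if)
  next
    case 2
    then have "\<bar>t\<bar> powr (p - 1) < \<bar>s\<bar> powr (p - 1)"
      using st pp by (intro powr_less_mono2) auto
    then show ?thesis using 2 st p
      by (cases "t = 0") (auto simp: dphi_def sgn_if)
  next
    case 3
    have "(-s) powr (p-1) > 0" "t powr (p-1) > 0" using 3 by auto
    then have "dphi p s < 0" "dphi p t > 0" using 3 p by (auto simp: dphi_def sgn_if)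
    then show ?thesis by linarith
  qed
qed

lemma phi_mid_less_aux:
  fixes u v :: real
  assumes p: "p > 1" and uv: "u < v"
  shows "\<bar>(u + v) / 2\<bar> powr p < (\<bar>u\<bar> powr p + \<bar>v\<bar> powr p) / 2"
proof -
  define m where "m = (u + v) / 2"
  define f where "f = (\<lambda>s::real. \<bar>s\<bar> powr p)"
  have D: "\<And>s. DERIV f s :> dphi p s" unfolding f_def using phi_deriv[OF p] .
  have "u < m" "m < v" using uv by (auto simp: m_def)
  obtain z1 where z1: "u < z1" "z1 < m" "f m - f u = (m - u) * dphi p z1"
    using MVT2[OF \<open>u < m\<close> D] by blast
  obtain z2 where z2: "m < z2" "z2 < v" "f v - f m = (v - m) * dphi p z2"
    using MVT2[OF \<open>m < v\<close> D] by blast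
  have "dphi p z1 < dphi p z2" using z1 z2 by (intro dphi_mono[OF p]) auto
  moreover have "m - u = v - m" "m - u > 0" using uv unfolding m_def by (simp_all add: field_simps)
  ultimately have "f m - f u < f v - f m"
    using z1(3) z2(3) by (metis mult_strict_left_mono)
  then show ?thesis by (simp add: f_def m_def)
qed

lemma phi_mid_less:
  fixes u v :: real
  assumes p: "p > 1" and uv: "u \<noteq> v"
  shows "\<bar>(u + v) / 2\<bar> powr p < (\<bar>u\<bar> powr p + \<bar>v\<bar> powr p) / 2"
proof (cases "u < v")
  case True then show ?thesis using phi_mid_less_aux[OF p] by blast
next
  case False then have "v < u" using uv by simp
  then show ?thesis using phi_mid_less_aux[OF p, of v u] by (simp add: add.commute)
qed

lemma phi_mid_le:
  fixes u v :: real
  assumes p: "p > 1"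
  shows "\<bar>(u + v) / 2\<bar> powr p \<le> (\<bar>u\<bar> powr p + \<bar>v\<bar> powr p) / 2"
  using phi_mid_less[OF p, of u v] by (cases "u = v") auto

lemma lp_pow_nonneg: "lp_pow p x \<ge> 0"
  unfolding lp_pow_def by (intro sum_nonneg) auto

lemma lp_pow_mid_le:
  assumes p: "p > 1"
  shows "lp_pow p ((1/2) *\<^sub>R (a + b)) \<le> (lp_pow p a + lp_pow p b) / 2"
proof -
  have "lp_pow p ((1/2) *\<^sub>R (a + b)) = (\<Sum>i\<in>UNIV. \<bar>(a$i + b$i) / 2\<bar> powr p)"
    unfolding lp_pow_def by (simp add: field_simps)
  also have "\<dots> \<le> (\<Sum>i\<in>UNIV. (\<bar>a$i\<bar> powr p + \<bar>b$i\<bar> powr p) / 2)"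
    by (intro sum_mono phi_mid_le[OF p])
  also have "\<dots> = (lp_pow p a + lp_pow p b) / 2"
    unfolding lp_pow_def by (simp only: sum_divide_distrib[symmetric] sum.distrib)
  finally show ?thesis .
qed

lemma lp_pow_mid_less:
  assumes p: "p > 1" and ab: "a \<noteq> b"
  shows "lp_pow p ((1/2) *\<^sub>R (a + b)) < (lp_pow p a + lp_pow p b) / 2"
proof -
  obtain j where j: "a$j \<noteq> b$j" using ab by (auto simp: vec_eq_iff)
  have "lp_pow p ((1/2) *\<^sub>R (a + b)) = (\<Sum>i\<in>UNIV. \<bar>(a$i + b$i) / 2\<bar> powr p)"
    unfolding lp_pow_def by (simp add: field_simps)
  also have "\<dots> < (\<Sum>i\<in>UNIV. (\<bar>a$i\<bar> powr p + \<bar>b$i\<bar> powr p) / 2)"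
    by (intro sum_strict_mono_ex1) (use phi_mid_le[OF p] phi_mid_less[OF p j] in auto)
  also have "\<dots> = (lp_pow p a + lp_pow p b) / 2"
    unfolding lp_pow_def by (simp only: sum_divide_distrib[symmetric] sum.distrib)
  finally show ?thesis .
qed

lemma lp_norm_le_iff:
  assumes p: "p > 0" and eta: "\<eta> > 0"
  shows "lp_norm p z \<le> \<eta> \<longleftrightarrow> lp_pow p z \<le> \<eta> powr p"
proof
  assume "lp_pow p z \<le> \<eta> powr p"
  then have "lp_pow p z powr (1/p) \<le> (\<eta> powr p) powr (1/p)"
    using p lp_pow_nonneg by (intro powr_mono2) auto
  also have "\<dots> = \<eta>" using p eta by (simp add: powr_powr)
  finally show "lp_norm p z \<le> \<eta>" by (simp add: lp_norm_def)
next
  assume a: "lp_norm p z \<le> \<eta>"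
  show "lp_pow p z \<le> \<eta> powr p"
  proof (rule ccontr)
    assume "\<not> ?thesis"
    then have "(\<eta> powr p) powr (1/p) < lp_pow p z powr (1/p)"
      using p eta by (intro powr_less_mono2) auto
    then have "\<eta> < lp_norm p z" using p eta by (simp add: powr_powr lp_norm_def)
    then show False using a by simp
  qed
qed

lemma lp_norm_eq:
  assumes p: "p > 0" and eta: "\<eta> > 0" and e: "lp_pow p z = \<eta> powr p"
  shows "lp_norm p z = \<eta>"
  using p eta e by (simp add: lp_norm_def powr_powr)

definition gradv :: "real \<Rightarrow> real^'n \<Rightarrow> real^'n" where
  "gradv p x = (\<chi> i. dphi p (x$i))"

lemma lp_pow_gderiv:
  fixes x :: "real^'n"
  assumes p: "p > 1"
  shows "GDERIV (lp_pow p) x :> gradv p x"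
proof -
  have c: "((\<lambda>x. \<bar>x$i\<bar> powr p) has_derivative (\<lambda>h. dphi p (x$i) * h$i)) (at x)" for i
  proof -
    have "((\<lambda>x::real^'n. x$i) has_derivative (\<lambda>h. h$i)) (at x)"
      using bounded_linear.has_derivative[OF bounded_linear_vec_nth has_derivative_ident] .
    moreover have "((\<lambda>s. \<bar>s\<bar> powr p) has_derivative (*) (dphi p (x$i))) (at (x$i))"
      using phi_deriv[OF p] by (simp add: has_field_derivative_def)
    ultimately show ?thesis by (rule has_derivative_compose)
  qed
  have "((\<lambda>x. \<Sum>i\<in>UNIV. \<bar>x$i\<bar> powr p) has_derivative (\<lambda>h. \<Sum>i\<in>UNIV. dphi p (x$i) * h$i)) (at x)"
    by (intro has_derivative_sum c)
  moreover have "(\<lambda>h. \<Sum>i\<in>UNIV. dphi p (x$i) * h$i) = (\<lambda>h. inner h (gradv p x))"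
    by (auto simp: inner_vec_def gradv_def mult.commute)
  ultimately show ?thesis
    unfolding gderiv_def lp_pow_def[abs_def] by simp
qed

lemma line_deriv:
  fixes x d :: "real^'n"
  assumes p: "p > 1"
  shows "((\<lambda>t. lp_pow p (x + t *\<^sub>R d)) has_real_derivative inner d (gradv p x)) (at 0)"
proof -
  have g: "(lp_pow p has_derivative (\<lambda>h. inner h (gradv p x))) (at (x + 0 *\<^sub>R d))"
    using lp_pow_gderiv[OF p, of x] by (simp add: gderiv_def)
  have l: "((\<lambda>t. x + t *\<^sub>R d) has_derivative (\<lambda>t. t *\<^sub>R d)) (at 0)"
    by (auto intro!: derivative_eq_intros)
  have "((\<lambda>t. lp_pow p (x + t *\<^sub>R d)) has_derivative (\<lambda>t. inner (t *\<^sub>R d) (gradv p x))) (at 0)"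
    using has_derivative_compose[OF l g] .
  then show ?thesis
    unfolding has_field_derivative_def
    by (rule has_derivative_eq_rhs) (auto simp: fun_eq_iff)
qed

lemma lp_pow_cont:
  assumes p: "p > 1"
  shows "continuous_on S (lp_pow p)"
proof -
  have "continuous (at x) (lp_pow p)" for x :: "real^'n"
    using lp_pow_gderiv[OF p, of x] unfolding gderiv_def by (rule has_derivative_continuous)
  then show ?thesis using continuous_at_imp_continuous_on by blast
qed

lemma feas_compact:
  assumes p: "p > 1" and eta: "\<eta> > 0"
  shows "compact {z::real^'n. lp_pow p z \<le> \<eta> powr p}"
proof -
  have "closed {z::real^'n. lp_pow p z \<le> \<eta> powr p}"
    by (intro closed_Collect_le lp_pow_cont[OF p] continuous_on_const)
  have "norm z \<le> real CARD('n) * \<eta>" if z: "lp_pow p z \<le> \<eta> powr p" for z :: "real^'n"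
  proof -
    have "\<bar>z$i\<bar> \<le> \<eta>" for i
    proof (rule ccontr)
      assume "\<not> ?thesis"
      then have "\<eta> powr p < \<bar>z$i\<bar> powr p" using p eta by (intro powr_less_mono2) auto
      also have "\<bar>z$i\<bar> powr p \<le> lp_pow p z"
        unfolding lp_pow_def by (rule member_le_sum) auto
      finally show False using z by simp
    qed
    then have "(\<Sum>i\<in>UNIV. \<bar>z$i\<bar>) \<le> real (card (UNIV::'n set)) * \<eta>"
      by (intro sum_bounded_above) auto
    then show ?thesis using norm_le_l1_cart[of z] by simp
  qed
  then have "bounded {z::real^'n. lp_pow p z \<le> \<eta> powr p}"
    unfolding bounded_iff by blast
  then show ?thesis using \<open>closed _\<close> by (simp add: compact_eq_bounded_closed)
qed

lemma small_h:
  fixes a \<delta> K :: real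
  assumes a: "a < 0" and d: "\<delta> > 0" and K: "K \<ge> 0"
    and H: "\<And>h. 0 < h \<Longrightarrow> h < \<delta> \<Longrightarrow> 0 \<le> 2 * a + h * K"
  shows False
proof -
  define h where "h = min (\<delta>/2) (-a/(K+1))"
  have "-a/(K+1) > 0" using a K by (intro divide_pos_pos) auto
  then have h0: "h > 0" using d by (auto simp: h_def)
  have hd: "h < \<delta>" using d by (auto simp: h_def)
  have "h * K \<le> (-a/(K+1)) * K" using K by (intro mult_right_mono) (auto simp: h_def)
  also have "(-a/(K+1)) * K < -a"
  proof -
    have "(-a) * K < (-a) * (K + 1)" using a by simp
    then show ?thesis using K by (simp add: field_simps)
  qed
  finally have "h * K < -a" .
  then show False using H[OF h0 hd] a by linarith
qed

context
  fixes p \<eta> :: real and A :: "real^'n^'m" and y :: "real^'m" and z0 :: "real^'n"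
  assumes p: "p > 1" and eta: "\<eta> > 0" and sol: "A *v z0 = y"
    and big: "\<And>z. A *v z = y \<Longrightarrow> \<eta> powr p < lp_pow p z"
begin

lemma feas_iff: "lp_norm p z \<le> \<eta> \<longleftrightarrow> lp_pow p z \<le> \<eta> powr p"
  using lp_norm_le_iff[of p \<eta> z] p eta by simp

lemma opt_exists: "\<exists>x. is_opt p A y \<eta> x"
proof -
  define S where "S = {z::real^'n. lp_pow p z \<le> \<eta> powr p}"
  have "compact S" unfolding S_def by (rule feas_compact[OF p eta])
  moreover have "0 \<in> S" using p eta by (simp add: S_def lp_pow_def)
  then have "S \<noteq> {}" by auto
  moreover have "continuous_on S (\<lambda>z. norm (A *v z - y))"
    by (intro continuous_intros)
  ultimately obtain x where x: "x \<in> S" "\<forall>z\<in>S. norm (A *v x - y) \<le> norm (A *v z - y)"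
    using continuous_attains_inf by blast
  then have "is_opt p A y \<eta> x"
    unfolding is_opt_def S_def by (auto simp: feas_iff)
  then show ?thesis ..
qed

lemma opt_not_interior:
  assumes opt: "is_opt p A y \<eta> x" and lt: "lp_pow p x < \<eta> powr p"
  shows False
proof -
  define f where "f = (\<lambda>t. lp_pow p (x + t *\<^sub>R (z0 - x)))"
  have "DERIV f 0 :> inner (z0 - x) (gradv p x)"
    unfolding f_def by (rule line_deriv[OF p])
  then have "isCont f 0" by (rule DERIV_isCont)
  then have "f \<midarrow>0\<rightarrow> f 0" by (simp add: isCont_def)
  moreover have "f 0 = lp_pow p x" by (simp add: f_def)
  ultimately have lim: "f \<midarrow>0\<rightarrow> lp_pow p x" by simp
  have "\<exists>s>0. \<forall>t. t \<noteq> 0 \<and> norm (t - 0) < s \<longrightarrow> norm (f t - lp_pow p x) < \<eta> powr p - lp_pow p x"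
    by (rule LIM_D[OF lim]) (use lt in simp)
  then obtain s where s: "s > 0" "\<And>t. t \<noteq> 0 \<and> norm (t - 0) < s \<Longrightarrow> norm (f t - lp_pow p x) < \<eta> powr p - lp_pow p x"
    by blast
  define t where "t = min (s/2) (1/2)"
  have t: "0 < t" "t < 1" "t \<noteq> 0" "norm (t - 0) < s" using s by (auto simp: t_def)
  have "f t < \<eta> powr p" using s(2)[of t] t by auto
  then have feas: "lp_norm p (x + t *\<^sub>R (z0 - x)) \<le> \<eta>" by (simp add: feas_iff f_def)
  have "A *v (x + t *\<^sub>R (z0 - x)) - y = (1 - t) *\<^sub>R (A *v x - y)"
    using sol by (simp add: algebra_simps)
  then have "norm (A *v x - y) \<le> (1 - t) * norm (A *v x - y)"
    using opt feas t unfolding is_opt_def by auto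
  then have "t * norm (A *v x - y) \<le> 0" by (simp add: algebra_simps)
  then have "norm (A *v x - y) \<le> 0" using t by (simp add: mult_le_0_iff)
  then have "A *v x = y" by simp
  then show False using big lt by fastforce
qed

lemma opt_boundary:
  assumes opt: "is_opt p A y \<eta> x"
  shows "lp_pow p x = \<eta> powr p"
  using opt opt_not_interior[OF opt] unfolding is_opt_def feas_iff by fastforce

lemma opt_resid_ne:
  assumes opt: "is_opt p A y \<eta> x"
  shows "A *v x \<noteq> y"
  using big opt_boundary[OF opt] by fastforce

lemma opt_same_image:
  assumes o1: "is_opt p A y \<eta> x1" and o2: "is_opt p A y \<eta> x2"
  shows "A *v x1 = A *v x2"
proof -
  define r1 where "r1 = A *v x1 - y"
  define r2 where "r2 = A *v x2 - y"
  define m where "m = (1/2) *\<^sub>R (x1 + x2)"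
  have f1: "lp_pow p x1 \<le> \<eta> powr p" and f2: "lp_pow p x2 \<le> \<eta> powr p"
    using o1 o2 unfolding is_opt_def feas_iff by auto
  have n12: "norm r1 = norm r2"
    using o1 o2 unfolding is_opt_def r1_def r2_def by (meson order_antisym)
  have "lp_pow p m \<le> (lp_pow p x1 + lp_pow p x2) / 2"
    unfolding m_def by (rule lp_pow_mid_le[OF p])
  also have "\<dots> \<le> \<eta> powr p" using f1 f2 by simp
  finally have "lp_pow p m \<le> \<eta> powr p" .
  then have "norm r1 \<le> norm (A *v m - y)"
    using o1 unfolding is_opt_def r1_def feas_iff by auto
  also have "A *v m - y = (1/2) *\<^sub>R (r1 + r2)"
    unfolding m_def r1_def r2_def by (simp add: algebra_simps vec_eq_iff)
  finally have "2 * norm r1 \<le> norm (r1 + r2)" by simp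
  then have "(2 * norm r1)\<^sup>2 \<le> (norm (r1 + r2))\<^sup>2"
    by (intro power_mono) auto
  moreover have "(norm (r1 + r2))\<^sup>2 + (norm (r1 - r2))\<^sup>2 = 2 * (norm r1)\<^sup>2 + 2 * (norm r2)\<^sup>2"
    by (simp add: power2_norm_eq_inner inner_add inner_diff inner_commute)
  moreover have "(2 * norm r1)\<^sup>2 = 4 * (norm r1)\<^sup>2" by (simp add: power_mult_distrib)
  moreover have "(norm r1)\<^sup>2 = (norm r2)\<^sup>2" using n12 by simp
  ultimately have "(norm (r1 - r2))\<^sup>2 \<le> 0" by linarith
  then have "r1 = r2" by simp
  then show ?thesis unfolding r1_def r2_def by simp
qed

lemma opt_unique:
  assumes o1: "is_opt p A y \<eta> x1" and o2: "is_opt p A y \<eta> x2"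
  shows "x1 = x2"
proof (rule ccontr)
  assume ne: "x1 \<noteq> x2"
  define m where "m = (1/2) *\<^sub>R (x1 + x2)"
  have e1: "lp_pow p x1 = \<eta> powr p" and e2: "lp_pow p x2 = \<eta> powr p"
    using opt_boundary o1 o2 by auto
  have lt: "lp_pow p m < \<eta> powr p"
    using lp_pow_mid_less[OF p ne] e1 e2 unfolding m_def by simp
  have "A *v m = (1/2) *\<^sub>R (A *v x1 + A *v x2)"
    unfolding m_def by (simp add: matrix_vector_mult_scaleR matrix_vector_right_distrib)
  then have im: "A *v m = A *v x1"
    using opt_same_image[OF o1 o2] by (simp add: vec_eq_iff)
  have "is_opt p A y \<eta> m"
    using o1 lt im unfolding is_opt_def feas_iff by auto
  then show False using opt_not_interior lt by blast
qed


lemma grad_ne0: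
  assumes opt: "is_opt p A y \<eta> x"
  shows "gradv p x \<noteq> 0"
proof
  assume g0: "gradv p x = 0"
  have "x$i = 0" for i
  proof (rule ccontr)
    assume ne: "x$i \<noteq> 0"
    have "\<bar>x$i\<bar> powr (p - 1) > 0" using ne by simp
    then have "dphi p (x$i) \<noteq> 0" using ne p by (auto simp: dphi_def sgn_if)
    moreover have "dphi p (x$i) = 0" using g0 by (simp add: gradv_def vec_eq_iff)
    ultimately show False by simp
  qed
  then have "x = 0" by (simp add: vec_eq_iff)
  then have "lp_pow p x = 0" using p by (simp add: lp_pow_def)
  moreover have "\<eta> powr p > 0" using eta by simp
  ultimately show False using opt_boundary[OF opt] by simp
qed

lemma kkt_dir:
  assumes opt: "is_opt p A y \<eta> x" and gd: "inner (gradv p x) d < 0"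
  shows "inner (transpose A *v (A *v x - y)) d \<ge> 0"
proof (rule ccontr)
  assume neg: "\<not> ?thesis"
  define e where "e = A *v x - y"
  define a where "a = inner (transpose A *v e) d"
  define K where "K = (norm (A *v d))\<^sup>2"
  have a0: "a < 0" using neg by (simp add: a_def e_def)
  have ae: "inner e (A *v d) = a"
    unfolding a_def by (simp add: dot_lmul_matrix)
  have D: "DERIV (\<lambda>t. lp_pow p (x + t *\<^sub>R d)) 0 :> inner d (gradv p x)"
    by (rule line_deriv[OF p])
  have "inner d (gradv p x) < 0" using gd by (simp add: inner_commute)
  from DERIV_neg_dec_right[OF D this] obtain \<delta> where
    \<delta>: "\<delta> > 0" "\<And>h. h > 0 \<Longrightarrow> h < \<delta> \<Longrightarrow> lp_pow p (x + (0 + h) *\<^sub>R d) < lp_pow p (x + 0 *\<^sub>R d)"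
    by blast
  show False
  proof (rule small_h[OF a0 \<delta>(1)])
    show "K \<ge> 0" by (simp add: K_def)
    fix h :: real assume h: "0 < h" "h < \<delta>"
    have "lp_pow p (x + h *\<^sub>R d) < \<eta> powr p"
      using \<delta>(2)[OF h] opt_boundary[OF opt] by simp
    then have "lp_norm p (x + h *\<^sub>R d) \<le> \<eta>" by (simp add: feas_iff)
    then have "norm e \<le> norm (A *v (x + h *\<^sub>R d) - y)"
      using opt unfolding is_opt_def e_def by blast
    also have "A *v (x + h *\<^sub>R d) - y = e + h *\<^sub>R (A *v d)"
      unfolding e_def by (simp add: algebra_simps)
    finally have "(norm e)\<^sup>2 \<le> (norm (e + h *\<^sub>R (A *v d)))\<^sup>2"
      by (intro power_mono) auto
    also have "\<dots> = (norm e)\<^sup>2 + 2 * h * a + h * h * K"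
      using ae by (simp add: power2_norm_eq_inner inner_add inner_commute K_def algebra_simps)
    finally have "0 \<le> h * (2 * a + h * K)" by (simp add: algebra_simps)
    then show "0 \<le> 2 * a + h * K" using h by (simp add: zero_le_mult_iff)
  qed
qed

lemma kkt_exists:
  assumes opt: "is_opt p A y \<eta> x"
  shows "\<exists>\<mu>\<ge>0. transpose A *v (A *v x - y) + \<mu> *\<^sub>R gradv p x = 0"
proof -
  define g where "g = gradv p x"
  define r where "r = transpose A *v (A *v x - y)"
  have g0: "g \<noteq> 0" using grad_ne0[OF opt] by (simp add: g_def)
  define gg where "gg = inner g g"
  have gg: "gg > 0" using g0 by (simp add: gg_def)
  define \<mu> where "\<mu> = - inner r g / gg"
  have "inner r (-g) \<ge> 0"
    using kkt_dir[OF opt, of "-g"] gg unfolding r_def g_def gg_def by simp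
  then have rg: "inner r g \<le> 0" by simp
  have mu: "\<mu> \<ge> 0" using rg gg by (simp add: \<mu>_def divide_nonpos_pos)
  define w where "w = r + \<mu> *\<^sub>R g"
  have "inner w g = inner r g + \<mu> * gg"
    by (simp add: w_def inner_add_left gg_def)
  then have wg: "inner w g = 0"
    using gg by (simp add: \<mu>_def)
  have "w = 0"
  proof (rule ccontr)
    assume "w \<noteq> 0"
    then have ww: "inner w w > 0" by simp
    define c where "c = \<bar>inner r g\<bar>"
    define \<epsilon> where "\<epsilon> = inner w w / (2 * (c + 1))"
    have c0: "c \<ge> 0" by (simp add: c_def)
    have \<epsilon>0: "\<epsilon> > 0" using ww c0 by (simp add: \<epsilon>_def)
    have "inner g (-w - \<epsilon> *\<^sub>R g) = - \<epsilon> * gg"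
      using wg by (simp add: inner_diff_right inner_commute gg_def)
    also have "\<dots> < 0" using \<epsilon>0 gg by simp
    finally have "inner r (-w - \<epsilon> *\<^sub>R g) \<ge> 0"
      using kkt_dir[OF opt] unfolding r_def g_def by blast
    moreover have "inner r w = inner w w"
    proof -
      have "r = w - \<mu> *\<^sub>R g" by (simp add: w_def)
      then have "inner r w = inner w w - \<mu> * inner g w" by (simp add: inner_diff_left)
      then show ?thesis using wg by (simp add: inner_commute)
    qed
    ultimately have "inner w w \<le> \<epsilon> * c"
      using rg by (simp add: inner_diff_right c_def)
    also have "\<epsilon> * c < inner w w"
    proof -
      have "\<epsilon> * c = inner w w * (c / (2 * (c + 1)))" by (simp add: \<epsilon>_def)
      also have "c / (2 * (c + 1)) < 1" using c0 by (simp add: field_simps)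
      then have "inner w w * (c / (2 * (c + 1))) < inner w w * 1"
        using ww by (intro mult_strict_left_mono) auto
      finally show ?thesis by simp
    qed
    finally show False by simp
  qed
  then show ?thesis using mu unfolding w_def r_def g_def by blast
qed

lemma gderiv_unique:
  fixes f :: "'a::real_inner \<Rightarrow> real"
  assumes "GDERIV f z :> g1" "GDERIV f z :> g2"
  shows "g1 = g2"
proof -
  have "(\<lambda>h. inner h g1) = (\<lambda>h. inner h g2)"
    using assms unfolding gderiv_def by (rule has_derivative_unique)
  then have "inner (g1 - g2) g1 = inner (g1 - g2) g2" by metis
  then have "inner (g1 - g2) (g1 - g2) = 0" by (simp add: inner_diff_right)
  then show ?thesis by simp
qed

lemma kkt_iff:
  assumes opt: "is_opt p A y \<eta> x"
  shows "is_kkt_mult p A y \<eta> x \<mu> \<longleftrightarrow> (0 \<le> \<mu> \<and> transpose A *v (A *v x - y) + \<mu> *\<^sub>R gradv p x = 0)"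
proof -
  have G: "GDERIV (lp_pow p) x :> gradv p x" by (rule lp_pow_gderiv[OF p])
  have "(\<exists>g. (GDERIV (lp_pow p) x :> g) \<and> transpose A *v (A *v x - y) + \<mu> *\<^sub>R g = 0)
      \<longleftrightarrow> transpose A *v (A *v x - y) + \<mu> *\<^sub>R gradv p x = 0"
    using G gderiv_unique[OF G] by metis
  then show ?thesis
    unfolding is_kkt_mult_def using opt_boundary[OF opt] by auto
qed

lemma kkt_unique:
  assumes opt: "is_opt p A y \<eta> x"
  shows "\<exists>!\<mu>. is_kkt_mult p A y \<eta> x \<mu>"
proof -
  obtain \<mu> where "\<mu> \<ge> 0" "transpose A *v (A *v x - y) + \<mu> *\<^sub>R gradv p x = 0"
    using kkt_exists[OF opt] by blast
  then have ex: "is_kkt_mult p A y \<eta> x \<mu>" by (simp add: kkt_iff[OF opt])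
  have "\<mu>' = \<mu>" if "is_kkt_mult p A y \<eta> x \<mu>'" for \<mu>'
  proof -
    have "transpose A *v (A *v x - y) + \<mu>' *\<^sub>R gradv p x = 0"
      "transpose A *v (A *v x - y) + \<mu> *\<^sub>R gradv p x = 0"
      using that ex by (auto simp: kkt_iff[OF opt])
    then have "\<mu>' *\<^sub>R gradv p x = \<mu> *\<^sub>R gradv p x" by (metis add_left_cancel)
    then show ?thesis using grad_ne0[OF opt] by simp
  qed
  with ex show ?thesis by blast
qed

end

lemma big_from_inf:
  fixes A :: "real^'n^'m" and y :: "real^'m"
  assumes p: "p > 1" and eta: "\<eta> > 0"
    and eta_lt: "\<eta> < Inf {lp_norm p x | x. A *v x = y}"
    and z: "A *v z = y"
  shows "\<eta> powr p < lp_pow p z"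
proof -
  have "bdd_below {lp_norm p x | x. A *v x = y}"
    by (rule bdd_belowI[of _ 0]) (auto simp: lp_norm_def)
  then have "Inf {lp_norm p x | x. A *v x = y} \<le> lp_norm p z"
    using z by (intro cInf_lower) auto
  then have "\<eta> < lp_norm p z" using eta_lt by simp
  then show ?thesis using lp_norm_le_iff[of p \<eta> z] p eta by auto
qed

lemma invertible_ker:
  fixes M :: "real^'m^'m"
  assumes "invertible M" "M *v e = 0"
  shows "e = 0"
proof -
  obtain M' where "M' ** M = mat 1" using assms(1) unfolding invertible_def by blast
  then have "e = M' *v (M *v e)" by (simp add: matrix_vector_mul_assoc)
  then show ?thesis using assms(2) by simp
qed

theorem proposition3p2:
  fixes A :: "real^'n^'m" and y :: "real^'m" and p \<eta> :: real
  assumes p: "p > 1"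
    and eta_pos: "0 < \<eta>"
    and eta_lt: "\<eta> < Inf {lp_norm p x | x. A *v x = y}"
  shows
    "(rank A = CARD('m) \<longrightarrow>
        (\<exists>!x. is_opt p A y \<eta> x) \<and>
        (\<forall>x. is_opt p A y \<eta> x \<longrightarrow>
           (\<exists>!\<mu>. is_kkt_mult p A y \<eta> x \<mu>) \<and>
           (\<forall>\<mu>. is_kkt_mult p A y \<eta> x \<mu> \<longrightarrow> \<mu> > 0) \<and>
           lp_norm p x = \<eta>))
     \<and>
     (CARD('n) \<ge> CARD('m) \<and> all_square_submatrices_invertible A \<and> y \<noteq> 0 \<longrightarrow>
        (\<exists>!x. is_opt p A y \<eta> x) \<and>
        (\<forall>x. is_opt p A y \<eta> x \<longrightarrow>
           card {i. x $ i \<noteq> 0} \<ge> CARD('n) - CARD('m) + 1))"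
proof (intro conjI impI)
  have big: "\<And>z. A *v z = y \<Longrightarrow> \<eta> powr p < lp_pow p z"
    using big_from_inf[OF p eta_pos eta_lt] by blast
  have EU: "\<exists>!x. is_opt p A y \<eta> x" if sol: "A *v z0 = y" for z0
    using opt_exists[OF p eta_pos sol big] opt_unique[OF p eta_pos sol big] by blast
  {
    assume rk: "rank A = CARD('m)"
    then obtain z0 where sol: "A *v z0 = y"
      using full_rank_surjective[of A] by (metis surjD)
    show "\<exists>!x. is_opt p A y \<eta> x" by (rule EU[OF sol])
    show "\<forall>x. is_opt p A y \<eta> x \<longrightarrow>
           (\<exists>!\<mu>. is_kkt_mult p A y \<eta> x \<mu>) \<and>
           (\<forall>\<mu>. is_kkt_mult p A y \<eta> x \<mu> \<longrightarrow> \<mu> > 0) \<and>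
           lp_norm p x = \<eta>"
    proof (intro allI impI conjI)
      fix x assume opt: "is_opt p A y \<eta> x"
      show "\<exists>!\<mu>. is_kkt_mult p A y \<eta> x \<mu>"
        by (rule kkt_unique[OF p eta_pos sol big opt])
      show "lp_norm p x = \<eta>"
        using lp_norm_eq[of p \<eta> x] opt_boundary[OF p eta_pos sol big opt] p eta_pos by simp
      fix \<mu> assume k: "is_kkt_mult p A y \<eta> x \<mu>"
      show "\<mu> > 0"
      proof -
        from k have mu: "\<mu> \<ge> 0" and eq: "transpose A *v (A *v x - y) + \<mu> *\<^sub>R gradv p x = 0"
          using kkt_iff[OF p eta_pos sol big opt] by auto
        show "\<mu> > 0"
        proof (rule ccontr)
          assume "\<not> \<mu> > 0"
          then have "\<mu> = 0" using mu by simp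
          then have "transpose A *v (A *v x - y) = transpose A *v 0" using eq by simp
          moreover have "inj ((*v) (transpose A))"
            using full_rank_injective[of "transpose A"] rk rank_transpose[of A] by simp
          ultimately have "A *v x - y = 0" by (metis injD)
          then show False using opt_resid_ne[OF p eta_pos sol big opt] by simp
        qed
      qed
    qed
  }
  {
    assume H: "CARD('n) \<ge> CARD('m) \<and> all_square_submatrices_invertible A \<and> y \<noteq> 0"
    have inv: "\<And>c :: 'm \<Rightarrow> 'n. inj c \<Longrightarrow> invertible ((\<chi> i k. A $ i $ c k) :: real^'m^'m)"
      using H unfolding all_square_submatrices_invertible_def by blast
    obtain c0 :: "'m \<Rightarrow> 'n" where c0: "inj c0"
      using card_le_inj[of "UNIV::'m set" "UNIV::'n set"] H by auto
    define B where "B = ((\<chi> i k. A $ i $ c0 k) :: real^'m^'m)"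
    obtain B' where BB: "B ** B' = mat 1" using inv[OF c0] unfolding invertible_def B_def by blast
    define C where "C = ((\<chi> j k. if j = c0 k then 1 else 0) :: real^'m^'n)"
    have AC: "A ** C = B"
      by (simp add: vec_eq_iff matrix_matrix_mult_def C_def B_def if_distrib cong: if_cong)
    define z0 where "z0 = C *v (B' *v y)"
    have sol: "A *v z0 = y"
  proof -
    have "A *v z0 = (A ** C) *v (B' *v y)" unfolding z0_def by (rule matrix_vector_mul_assoc)
    also have "\<dots> = (B ** B') *v y" unfolding AC by (rule matrix_vector_mul_assoc)
    finally show ?thesis by (simp add: BB)
  qed
    show "\<exists>!x. is_opt p A y \<eta> x" by (rule EU[OF sol])
    show "\<forall>x. is_opt p A y \<eta> x \<longrightarrow> card {i. x $ i \<noteq> 0} \<ge> CARD('n) - CARD('m) + 1"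
    proof (intro allI impI)
      fix x assume opt: "is_opt p A y \<eta> x"
      obtain \<mu> where eq: "transpose A *v (A *v x - y) + \<mu> *\<^sub>R gradv p x = 0"
        using kkt_exists[OF p eta_pos sol big opt] by blast
      define e where "e = A *v x - y"
      have e0: "e \<noteq> 0" using opt_resid_ne[OF p eta_pos sol big opt] by (simp add: e_def)
      define Z where "Z = {i. x $ i = 0}"
      define NZ where "NZ = {i. x $ i \<noteq> 0}"
      have cardsum: "card Z + card NZ = CARD('n)"
      proof -
        have "Z \<union> NZ = UNIV" "Z \<inter> NZ = {}" by (auto simp: Z_def NZ_def)
        then show ?thesis using card_Un_disjoint[of Z NZ] by simp
      qed
      show "card {i. x $ i \<noteq> 0} \<ge> CARD('n) - CARD('m) + 1"
      proof (rule ccontr)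
        assume "\<not> ?thesis"
        then have "card Z \<ge> CARD('m)" using cardsum H unfolding NZ_def by linarith
        then obtain c :: "'m \<Rightarrow> 'n" where c: "c ` UNIV \<subseteq> Z" "inj c"
          using card_le_inj[of "UNIV::'m set" Z] by auto
        define Bc where "Bc = ((\<chi> i k. A $ i $ c k) :: real^'m^'m)"
        have invT: "invertible (transpose Bc)"
          using transpose_invertible inv[OF c(2)] unfolding Bc_def by blast
        have "(transpose A *v e) $ (c k) = 0" for k
        proof -
          have "x $ c k = 0" using c(1) by (auto simp: Z_def)
          then have "gradv p x $ c k = 0" by (simp add: gradv_def dphi_def)
          moreover have "(transpose A *v e) $ (c k) + \<mu> * gradv p x $ c k = 0"
            using eq unfolding e_def vec_eq_iff by (metis vector_add_component vector_scaleR_component zero_index real_scaleR_def)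
          ultimately show ?thesis by simp
        qed
        then have "transpose Bc *v e = 0"
          by (simp add: vec_eq_iff Bc_def vector_matrix_mult_def)
        then have "e = 0" by (rule invertible_ker[OF invT])
        then show False using e0 by simp
      qed
    qed
  }
qed

end
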